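(* Let $s_\beta$ be the base phi sum of digits function. Consider the alphabet $\{0,1,2,\dots\}\times\{c_0,c_1,c_2,c_3\}$, writing letters as pairs $(j,c)$, and the morphism $\gamma$ defined for all $j\ge0$ by $\gamma((j,c_0))=(j,c_0)(j,c_1)$, $\gamma((j,c_1))=(j,c_2)(j,c_3)$, $\gamma((j,c_2))=(j+2,c_0)(j+2,c_1)(j+2,c_2)$, $\gamma((j,c_3))=(j+1,c_3)(j+2,c_2)(j+1,c_3)$. Let $x_\gamma=\lim_n\gamma^n((0,c_0))$ be the fixed point of $\gamma$ with initial letter $(0,c_0)$, and let $\delta$ be the morphism from this alphabet to words over the nonnegative integers given by $\delta((j,c_0))=(j,\,j+1)$, $\delta((j,c_1))=(j+2)$, $\delta((j,c_2))=(j+2,\,j+3)$, $\delta((j,c_3))=(j+3,\,j+3)$. Then $\delta(x_\gamma)$ equals the sequence $(s_\beta(N))_{N\ge0}$.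
   Context: Let $\varphi=(1+\sqrt5)/2$. Every natural number $N$ can be written uniquely (ignoring leading and trailing zeros) as a finite sum $N=\sum_{i=R}^{L}d_i\varphi^i$ with $i$ ranging over integers (possibly negative), digits $d_i\in\{0,1\}$, and no two consecutive digits $d_i,d_{i+1}$ both equal to $1$ (base phi expansion). The base phi sum of digits function $s_\beta(N)$ is the number of digits equal to $1$ in this expansion, with $s_\beta(0)=0$. The image of an infinite word under a morphism is the concatenation of the images of its letters. *)

theory Defs
  imports Complex_Main
begin

definition phi :: real where
  "phi = (1 + sqrt 5) / 2"

text \<open>A base phi expansion of N is described by the finite set S of integer
  positions i with digit d_i = 1; no two consecutive positions are both in S.\<close>
definition phi_expansion :: "nat \<Rightarrow> int set \<Rightarrow> bool" where
  "phi_expansion N S \<longleftrightarrow>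
     finite S \<and> (\<forall>i\<in>S. i + 1 \<notin> S) \<and> real N = (\<Sum>i\<in>S. phi powi i)"

definition s_beta :: "nat \<Rightarrow> nat" where
  "s_beta N = card (THE S. phi_expansion N S)"

datatype col = c0 | c1 | c2 | c3

type_synonym letter = "nat \<times> col"

fun gamma :: "letter \<Rightarrow> letter list" where
  "gamma (j, c0) = [(j, c0), (j, c1)]"
| "gamma (j, c1) = [(j, c2), (j, c3)]"
| "gamma (j, c2) = [(j + 2, c0), (j + 2, c1), (j + 2, c2)]"
| "gamma (j, c3) = [(j + 1, c3), (j + 2, c2), (j + 1, c3)]"

fun delta :: "letter \<Rightarrow> nat list" where
  "delta (j, c0) = [j, j + 1]"
| "delta (j, c1) = [j + 2]"
| "delta (j, c2) = [j + 2, j + 3]"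
| "delta (j, c3) = [j + 3, j + 3]"

definition gamma_word :: "letter list \<Rightarrow> letter list" where
  "gamma_word w = concat (map gamma w)"

definition gamma_iter :: "nat \<Rightarrow> letter list" where
  "gamma_iter k = (gamma_word ^^ k) [(0, c0)]"

definition is_gamma_limit :: "(nat \<Rightarrow> letter) \<Rightarrow> bool" where
  "is_gamma_limit x \<longleftrightarrow>
     (\<forall>n. \<exists>K. \<forall>k\<ge>K. n < length (gamma_iter k) \<and> gamma_iter k ! n = x n)"

definition x_gamma :: "nat \<Rightarrow> letter" where
  "x_gamma = (THE x. is_gamma_limit x)"

end

theory Submission
  imports Defs
begin


definition f :: "int \<Rightarrow> real" where "f i = phi powi i"

lemma phi_gt1: "phi > 1"
proof -
  have "sqrt 5 > 1" by (simp add: real_less_rsqrt)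
  thus ?thesis by (simp add: phi_def)
qed

lemma phi_sq: "phi^2 = phi + 1"
  by (simp add: phi_def power2_eq_square field_simps)

lemma f_pos: "f i > 0" using phi_gt1 by (simp add: f_def)

lemma f_rec: "f (i+2) = f (i+1) + f i"
proof -
  have ne: "phi \<noteq> 0" using phi_gt1 by simp
  have "f (i+2) = f i * phi^2" unfolding f_def using ne by (simp add: power_int_add)
  also have "\<dots> = f i * phi + f i" by (simp add: phi_sq algebra_simps)
  also have "f i * phi = f (i+1)" unfolding f_def using ne by (simp add: power_int_add)
  finally show ?thesis .
qed

lemma f_rec': "j = i + 1 \<Longrightarrow> k = i + 2 \<Longrightarrow> f k = f j + f i"
  using f_rec by simp

lemma fcong: "i = j \<Longrightarrow> f i = f j" by simp

lemma f_strict_mono: "i < j \<Longrightarrow> f i < f j"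
  unfolding f_def using phi_gt1 by (simp add: power_int_strict_increasing)

lemma f_mono: "i \<le> j \<Longrightarrow> f i \<le> f j"
  unfolding f_def using phi_gt1 by (simp add: power_int_increasing)

definition nonadj :: "int set \<Rightarrow> bool" where "nonadj S \<longleftrightarrow> (\<forall>i\<in>S. i + 1 \<notin> S)"

lemma sum_lt:
  "finite S \<Longrightarrow> nonadj S \<Longrightarrow> (\<forall>i\<in>S. i \<le> m) \<Longrightarrow> sum f S < f (m+1)"
proof (induction "card S" arbitrary: S m rule: less_induct)
  case less
  show ?case
  proof (cases "S = {}")
    case True thus ?thesis using f_pos by simp
  next
    case False
    define M where "M = Max S"
    have MS: "M \<in> S" using False less.prems M_def by simp
    have Mm: "M \<le> m" using MS less.prems by auto
    define S' where "S' = S - {M}"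
    have cardlt: "card S' < card S" using card_Diff1_less[OF less.prems(1) MS] S'_def by simp
    have b: "\<forall>i\<in>S'. i \<le> M - 2"
    proof
      fix i assume i: "i \<in> S'"
      hence "i \<le> M" "i \<noteq> M" using M_def less.prems S'_def by auto
      moreover have "i \<noteq> M - 1" using i less.prems(2) MS unfolding nonadj_def S'_def by force
      ultimately show "i \<le> M - 2" by linarith
    qed
    have na: "nonadj S'" using less.prems(2) unfolding nonadj_def S'_def by auto
    have "sum f S' < f (M - 2 + 1)"
      using less.hyps[OF cardlt _ na b] less.prems(1) S'_def by simp
    moreover have "sum f S = f M + sum f S'"
      using MS less.prems(1) S'_def by (simp add: sum.remove)
    moreover have "f (M+1) = f M + f (M - 1)" using f_rec'[of M "M - 1" "M+1"] by simp
    moreover have "f (M+1) \<le> f (m+1)" using Mm f_mono by simp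
    ultimately show ?thesis by simp
  qed
qed

lemma sum_ge: "finite S \<Longrightarrow> i \<in> S \<Longrightarrow> f i \<le> sum f S"
  using f_pos by (intro member_le_sum) (auto intro: less_imp_le)

lemma uniq:
  "finite S \<Longrightarrow> nonadj S \<Longrightarrow> finite T \<Longrightarrow> nonadj T \<Longrightarrow> sum f S = sum f T \<Longrightarrow> S = T"
proof (induction "card S" arbitrary: S T rule: less_induct)
  case less
  show ?case
  proof (cases "S = {} \<or> T = {}")
    case True
    have hS: "S \<noteq> {} \<Longrightarrow> sum f S > 0" using less.prems f_pos by (intro sum_pos) auto
    have hT: "T \<noteq> {} \<Longrightarrow> sum f T > 0" using less.prems f_pos by (intro sum_pos) auto
    show ?thesis using True hS hT less.prems(5) by force
  next
    case False
    define M where "M = Max S"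
    define M' where "M' = Max T"
    have MS: "M \<in> S" using False less.prems M_def by simp
    have MT: "M' \<in> T" using False less.prems M'_def by simp
    have S1: "sum f S < f (M+1)" using sum_lt[OF less.prems(1,2), of M] less.prems(1) M_def by simp
    have T1: "sum f T < f (M'+1)" using sum_lt[OF less.prems(3,4), of M'] less.prems(3) M'_def by simp
    have S2: "f M \<le> sum f S" using sum_ge[OF less.prems(1) MS] .
    have T2: "f M' \<le> sum f T" using sum_ge[OF less.prems(3) MT] .
    have eq: "M = M'"
    proof (rule ccontr)
      assume "M \<noteq> M'"
      hence "M + 1 \<le> M' \<or> M' + 1 \<le> M" by linarith
      thus False using f_mono[of "M+1" M'] f_mono[of "M'+1" M] S1 S2 T1 T2 less.prems(5) by auto
    qed
    define S' where "S' = S - {M}"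
    define T' where "T' = T - {M}"
    have cardlt: "card S' < card S" using card_Diff1_less[OF less.prems(1) MS] S'_def by simp
    have "sum f S = f M + sum f S'" using MS less.prems(1) S'_def by (simp add: sum.remove)
    moreover have "sum f T = f M + sum f T'" using MT eq less.prems(3) T'_def by (simp add: sum.remove)
    ultimately have "sum f S' = sum f T'" using less.prems(5) by simp
    moreover have "nonadj S'" "nonadj T'" using less.prems unfolding nonadj_def S'_def T'_def by auto
    ultimately have "S' = T'" using less.hyps[OF cardlt] less.prems S'_def T'_def by simp
    thus ?thesis using MS MT eq S'_def T'_def by blast
  qed
qed

lemma exp_iff: "phi_expansion N S \<longleftrightarrow> finite S \<and> nonadj S \<and> real N = sum f S"
  unfolding phi_expansion_def nonadj_def f_def by simp

lemma sb_eq: "phi_expansion N S \<Longrightarrow> s_beta N = card S"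
proof -
  assume a: "phi_expansion N S"
  have "(THE S. phi_expansion N S) = S"
    by (rule the_equality) (use a uniq in \<open>auto simp: exp_iff\<close>)
  thus ?thesis by (simp add: s_beta_def)
qed



fun luc :: "nat \<Rightarrow> nat" where
  "luc 0 = 2" | "luc (Suc 0) = 1" | "luc (Suc (Suc n)) = luc (Suc n) + luc n"

lemma luc_real: "real (luc (2*k)) = f (2*int k) + f (-(2*int k)) \<and>
                 real (luc (2*k+1)) = f (2*int k+1) - f (-(2*int k+1))"
proof (induction k)
  case 0 thus ?case using phi_sq phi_gt1 by (simp add: f_def field_simps power2_eq_square)
next
  case (Suc k)
  have e1: "luc (2*Suc k) = luc (2*k+1) + luc (2*k)"
    by simp
  have e2: "luc (2*Suc k + 1) = luc (2*Suc k) + luc (2*k+1)"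
    by simp
  have r1: "f (2*int k + 2) = f (2*int k+1) + f (2*int k)" by (rule f_rec') auto
  have r2: "f (-(2*int k)) = f (-(2*int k) - 1) + f (-(2*int k) - 2)" by (rule f_rec') auto
  have r3: "f (2*int k + 3) = f (2*int k+2) + f (2*int k + 1)" by (rule f_rec') auto
  have r4: "f (-(2*int k) - 1) = f (-(2*int k) - 2) + f (-(2*int k) - 3)" by (rule f_rec') auto
  have q1: "f (2*int (Suc k)) = f (2*int k + 2)" "f (-(2*int (Suc k))) = f (-(2*int k) - 2)"
    "f (-(2*int k+1)) = f (-(2*int k) - 1)" "f (2*int (Suc k)+1) = f (2*int k + 3)"
    "f (-(2*int (Suc k)+1)) = f (-(2*int k) - 3)" by (rule fcong, simp)+
  have IH1: "real (luc (2*k)) = f (2*int k) + f (-(2*int k))"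
   and IH2: "real (luc (2*k+1)) = f (2*int k+1) - f (-(2*int k+1))" using Suc by auto
  have e1': "real (luc (2*Suc k)) = real (luc (2*k+1)) + real (luc (2*k))" using e1 by simp
  have e2': "real (luc (2*Suc k+1)) = real (luc (2*Suc k)) + real (luc (2*k+1))" using e2 by simp
  have a1: "real (luc (2*Suc k)) = f (2*int (Suc k)) + f (-(2*int (Suc k)))"
    using e1' IH1 IH2 q1 r1 r2 by linarith
  moreover have "real (luc (2*Suc k+1)) = f (2*int (Suc k)+1) - f (-(2*int (Suc k)+1))"
    using e2' a1 IH2 q1 r3 r4 r1 r2 by linarith
  ultimately show ?case by blast
qed

lemma lucE: "real (luc (2*k)) = f (2*int k) + f (-(2*int k))" using luc_real by blast
lemma lucO: "real (luc (2*k+1)) = f (2*int k+1) - f (-(2*int k+1))" using luc_real by blast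

lemma luc_rec: "luc (n+2) = luc (n+1) + luc n"
  by (simp add: numeral_2_eq_2)

lemma luc_pos: "luc n \<ge> 1"
  by (induction n rule: luc.induct) auto

lemma luc_step: "n \<ge> 1 \<Longrightarrow> luc n < luc (Suc n)"
proof (cases n)
  case (Suc m) thus ?thesis using luc_pos[of m] by simp
qed simp

lemma luc_smono: "1 \<le> a \<Longrightarrow> a < b \<Longrightarrow> luc a < luc b"
proof (induction b)
  case (Suc b)
  thus ?case using luc_step[of b] by (cases "a = b") auto
qed simp

lemma luc_mono_iff: "1 \<le> a \<Longrightarrow> 1 \<le> b \<Longrightarrow> luc a \<le> luc b \<longleftrightarrow> a \<le> b"
  using luc_smono by (metis le_less not_le)

lemma luc_ge: "luc (n+1) \<ge> n+1"
  by (induction n rule: luc.induct) (auto simp: numeral_2_eq_2)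

lemma locate_aux: "2 \<le> m \<Longrightarrow> m \<le> luc (2*j+1) \<Longrightarrow>
   \<exists>i. (1 \<le> i \<and> luc (2*i) \<le> m \<and> m \<le> luc (2*i+1)) \<or> (luc (2*i+1) < m \<and> m < luc (2*i+2))"
proof (induction j)
  case 0 thus ?case by simp
next
  case (Suc j)
  show ?case
  proof (cases "m \<le> luc (2*j+1)")
    case True thus ?thesis using Suc by blast
  next
    case False
    show ?thesis
    proof (cases "m < luc (2*j+2)")
      case True thus ?thesis using False by (intro exI[of _ j]) auto
    next
      case F2: False
      have "luc (2*Suc j) \<le> m" "m \<le> luc (2*Suc j+1)" using F2 Suc.prems by auto
      thus ?thesis by (intro exI[of _ "Suc j"]) auto
    qed
  qed
qed

lemma locate: "2 \<le> m \<Longrightarrow>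
   \<exists>i. (1 \<le> i \<and> luc (2*i) \<le> m \<and> m \<le> luc (2*i+1)) \<or> (luc (2*i+1) < m \<and> m < luc (2*i+2))"
  using locate_aux[of m m] luc_ge[of "2*m"] by simp



lemma nonadj_insert: "nonadj (insert a S) \<longleftrightarrow> nonadj S \<and> a + 1 \<notin> S \<and> a - 1 \<notin> S"
  unfolding nonadj_def by (auto simp: algebra_simps)

lemma nonadj_empty[simp]: "nonadj {}" by (simp add: nonadj_def)

lemma lucE2: "real (luc (2*k+2)) = f (2*int k+2) + f (-(2*int k+2))"
proof -
  have "real (luc (2*Suc k)) = f (2*int (Suc k)) + f (-(2*int (Suc k)))" by (rule lucE)
  moreover have "f (2*int (Suc k)) = f (2*int k+2)" "f (-(2*int (Suc k))) = f (-(2*int k+2))"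
    by (rule fcong, simp)+
  moreover have "luc (2*Suc k) = luc (2*k+2)" by (rule arg_cong[where f=luc]) simp
  ultimately show ?thesis by (metis (no_types))
qed

lemma lucO2: "real (luc (2*k+3)) = f (2*int k+3) - f (-(2*int k+3))"
proof -
  have "real (luc (2*Suc k+1)) = f (2*int (Suc k)+1) - f (-(2*int (Suc k)+1))" by (rule lucO)
  moreover have "f (2*int (Suc k)+1) = f (2*int k+3)" "f (-(2*int (Suc k)+1)) = f (-(2*int k+3))"
    by (rule fcong, simp)+
  moreover have "luc (2*Suc k+1) = luc (2*k+3)" by (rule arg_cong[where f=luc]) simp
  ultimately show ?thesis by (metis (no_types))
qed

lemma lucO2': "real (luc (2*k+5)) = f (2*int k+5) - f (-(2*int k+5))"
proof -
  have "real (luc (2*Suc k+3)) = f (2*int (Suc k)+3) - f (-(2*int (Suc k)+3))" by (rule lucO2)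
  moreover have "f (2*int (Suc k)+3) = f (2*int k+5)" "f (-(2*int (Suc k)+3)) = f (-(2*int k+5))"
    by (rule fcong, simp)+
  moreover have "luc (2*Suc k+3) = luc (2*k+5)" by (rule arg_cong[where f=luc]) simp
  ultimately show ?thesis by (metis (no_types))
qed

lemma constrC:
  assumes e: "phi_expansion m R" and b: "R \<subseteq> {-(2*int k)..2*int k}"
  shows "phi_expansion (luc (2*k+2) + m) (insert (2*int k+2) (insert (-(2*int k+2)) R))
       \<and> card (insert (2*int k+2) (insert (-(2*int k+2)) R)) = card R + 2"
proof -
  have fin: "finite R" and na: "nonadj R" and sm: "real m = sum f R" using e by (auto simp: exp_iff)
  have n1: "2*int k+2 \<notin> R" "-(2*int k+2) \<notin> R" "2*int k+3 \<notin> R" "2*int k+1 \<notin> R"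
     "-(2*int k+1) \<notin> R" "-(2*int k+3) \<notin> R" using b by auto
  have na2: "nonadj (insert (2*int k+2) (insert (-(2*int k+2)) R))"
    using na n1 by (simp add: nonadj_insert algebra_simps)
  have s: "sum f (insert (2*int k+2) (insert (-(2*int k+2)) R)) = f (2*int k+2) + f (-(2*int k+2)) + sum f R"
    using fin n1 by simp
  show ?thesis using fin na2 s sm lucE2[of k] n1 by (simp add: exp_iff)
qed

lemma constrDa:
  assumes e: "phi_expansion N (insert (2*int k+1) (insert (-(2*int k+2)) R))"
    and b: "R \<subseteq> {1-2*int k..2*int k-1}" and N: "N = luc (2*k+1) + m"
  shows "phi_expansion (luc (2*k+3) + m) (insert (2*int k+3) (insert (-(2*int k+4)) (insert (-(2*int k+1)) R)))
       \<and> card (insert (2*int k+3) (insert (-(2*int k+4)) (insert (-(2*int k+1)) R)))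
         = card (insert (2*int k+1) (insert (-(2*int k+2)) R)) + 1"
proof -
  have fin: "finite R" and na: "nonadj R" using e by (auto simp: exp_iff nonadj_insert)
  have n1: "2*int k+1 \<notin> R" "-(2*int k+2) \<notin> R" "2*int k+3 \<notin> R" "-(2*int k+4) \<notin> R"
     "-(2*int k+1) \<notin> R" "2*int k+2 \<notin> R" "2*int k+4 \<notin> R" "-(2*int k+3) \<notin> R" "-(2*int k+5) \<notin> R"
     "-(2*int k) \<notin> R"
    using b by auto
  have sm: "real N = f (2*int k+1) + f (-(2*int k+2)) + sum f R" using e fin n1 by (simp add: exp_iff)
  have na2: "nonadj (insert (2*int k+3) (insert (-(2*int k+4)) (insert (-(2*int k+1)) R)))"
    using na n1 by (simp add: nonadj_insert algebra_simps)
  have s: "sum f (insert (2*int k+3) (insert (-(2*int k+4)) (insert (-(2*int k+1)) R)))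
     = f (2*int k+3) + f (-(2*int k+4)) + f (-(2*int k+1)) + sum f R"
    using fin n1 by simp
  have r: "f (-(2*int k+2)) = f (-(2*int k+3)) + f (-(2*int k+4))" by (rule f_rec') auto
  have "real (luc (2*k+3) + m) = sum f (insert (2*int k+3) (insert (-(2*int k+4)) (insert (-(2*int k+1)) R)))"
    using s sm N lucO2[of k] lucO[of k] r by simp
  thus ?thesis using fin na2 n1 by (simp add: exp_iff)
qed

lemma constrDc:
  assumes e: "phi_expansion N (insert (2*int k+1) (insert (-(2*int k+2)) R))"
    and b: "R \<subseteq> {1-2*int k..2*int k-1}" and N: "N = luc (2*k+1) + m"
  shows "phi_expansion (luc (2*k+3) + luc (2*k+1) + m) (insert (2*int k+3) (insert (-(2*int k+4)) (insert (2*int k+1) R)))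
       \<and> card (insert (2*int k+3) (insert (-(2*int k+4)) (insert (2*int k+1) R)))
         = card (insert (2*int k+1) (insert (-(2*int k+2)) R)) + 1"
proof -
  have fin: "finite R" and na: "nonadj R" using e by (auto simp: exp_iff nonadj_insert)
  have n1: "2*int k+1 \<notin> R" "-(2*int k+2) \<notin> R" "2*int k+3 \<notin> R" "-(2*int k+4) \<notin> R"
     "2*int k \<notin> R" "2*int k+2 \<notin> R" "2*int k+4 \<notin> R" "-(2*int k+3) \<notin> R" "-(2*int k+5) \<notin> R"
    using b by auto
  have sm: "real N = f (2*int k+1) + f (-(2*int k+2)) + sum f R" using e fin n1 by (simp add: exp_iff)
  have na2: "nonadj (insert (2*int k+3) (insert (-(2*int k+4)) (insert (2*int k+1) R)))"
    using na n1 by (simp add: nonadj_insert algebra_simps)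
  have s: "sum f (insert (2*int k+3) (insert (-(2*int k+4)) (insert (2*int k+1) R)))
     = f (2*int k+3) + f (-(2*int k+4)) + f (2*int k+1) + sum f R"
    using fin n1 by simp
  have r: "f (-(2*int k+2)) = f (-(2*int k+3)) + f (-(2*int k+4))" by (rule f_rec') auto
  have "real (luc (2*k+3) + luc (2*k+1) + m) = sum f (insert (2*int k+3) (insert (-(2*int k+4)) (insert (2*int k+1) R)))"
    using s sm N lucO2[of k] r by simp
  thus ?thesis using fin na2 n1 by (simp add: exp_iff)
qed

lemma constrDb:
  assumes e: "phi_expansion m (insert (2*int j+2) (insert (-(2*int j+2)) R))"
    and b: "R \<subseteq> {-(2*int j)..2*int j}"
  shows "phi_expansion (luc (2*j+5) + m) (insert (2*int j+5) (insert (-(2*int j+6)) (insert (2*int j+2) (insert (-(2*int j+3)) R))))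
       \<and> card (insert (2*int j+5) (insert (-(2*int j+6)) (insert (2*int j+2) (insert (-(2*int j+3)) R))))
         = card (insert (2*int j+2) (insert (-(2*int j+2)) R)) + 2"
proof -
  have fin: "finite R" and na: "nonadj R" using e by (auto simp: exp_iff nonadj_insert)
  have n1: "2*int j+2 \<notin> R" "-(2*int j+2) \<notin> R" "2*int j+5 \<notin> R" "-(2*int j+6) \<notin> R"
     "-(2*int j+3) \<notin> R" "2*int j+3 \<notin> R" "2*int j+1 \<notin> R" "2*int j+4 \<notin> R" "2*int j+6 \<notin> R"
     "-(2*int j+4) \<notin> R" "-(2*int j+5) \<notin> R" "-(2*int j+7) \<notin> R"
    using b by auto
  have sm: "real m = f (2*int j+2) + f (-(2*int j+2)) + sum f R" using e fin n1 by (simp add: exp_iff)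
  have na2: "nonadj (insert (2*int j+5) (insert (-(2*int j+6)) (insert (2*int j+2) (insert (-(2*int j+3)) R))))"
    using na n1 by (simp add: nonadj_insert algebra_simps)
  have s: "sum f (insert (2*int j+5) (insert (-(2*int j+6)) (insert (2*int j+2) (insert (-(2*int j+3)) R))))
     = f (2*int j+5) + f (-(2*int j+6)) + f (2*int j+2) + f (-(2*int j+3)) + sum f R"
    using fin n1 by simp
  have r1: "f (-(2*int j+2)) = f (-(2*int j+3)) + f (-(2*int j+4))" by (rule f_rec') auto
  have r2: "f (-(2*int j+4)) = f (-(2*int j+5)) + f (-(2*int j+6))" by (rule f_rec') auto
  have "real (luc (2*j+5) + m) = sum f (insert (2*int j+5) (insert (-(2*int j+6)) (insert (2*int j+2) (insert (-(2*int j+3)) R))))"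
    using s sm lucO2'[of j] r1 r2 by simp
  thus ?thesis using fin na2 n1 by (simp add: exp_iff)
qed



declare luc.simps(3)[simp del]

lemma luc_gt0[simp]: "0 < luc n" using luc_pos[of n] by simp

lemma luc_rec': "a = n+2 \<Longrightarrow> b = n+1 \<Longrightarrow> luc a = luc b + luc n"
  using luc_rec by simp

definition CS :: "nat \<Rightarrow> nat \<Rightarrow> bool" where
  "CS k N \<longleftrightarrow> (\<exists>R. phi_expansion N (insert (2*int k+2) (insert (-(2*int k+2)) R)) \<and> R \<subseteq> {-(2*int k)..2*int k})"

definition DS :: "nat \<Rightarrow> nat \<Rightarrow> bool" where
  "DS k N \<longleftrightarrow> (\<exists>R. phi_expansion N (insert (2*int k+1) (insert (-(2*int k+2)) R)) \<and> R \<subseteq> {1-2*int k..2*int k-1})"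

definition Good :: "nat \<Rightarrow> bool" where
  "Good N \<longleftrightarrow> (\<forall>k. luc (2*k+2) \<le> N \<longrightarrow> N \<le> luc (2*k+3) \<longrightarrow> CS k N) \<and>
              (\<forall>k. luc (2*k+1) < N \<longrightarrow> N < luc (2*k+2) \<longrightarrow> DS k N)"

lemma CS_I: "phi_expansion N (insert a (insert b R)) \<Longrightarrow> a = 2*int k+2 \<Longrightarrow> b = -(2*int k+2) \<Longrightarrow>
   (\<forall>x\<in>R. -(2*int k) \<le> x \<and> x \<le> 2*int k) \<Longrightarrow> CS k N"
  unfolding CS_def by auto

lemma DS_I: "phi_expansion N (insert a (insert b R)) \<Longrightarrow> a = 2*int k+1 \<Longrightarrow> b = -(2*int k+2) \<Longrightarrow>
   (\<forall>x\<in>R. 1-2*int k \<le> x \<and> x \<le> 2*int k-1) \<Longrightarrow> DS k N"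
  unfolding DS_def by auto

lemma exp0: "phi_expansion 0 {}" by (simp add: exp_iff)
lemma exp1: "phi_expansion 1 {0}" by (simp add: exp_iff f_def nonadj_def)
lemma exp2: "phi_expansion 2 {1, -2}"
proof -
  have a: "f 1 = f 0 + f (-1)" by (rule f_rec') auto
  have b: "f 0 = f (-1) + f (-2)" by (rule f_rec') auto
  have c: "f 0 = 1" by (simp add: f_def)
  have "sum f {1, -2} = f 1 + f (-2)" by simp
  thus ?thesis using a b c by (simp add: exp_iff nonadj_def)
qed

lemma Bnd:
  assumes g: "Good m"
  shows "\<exists>S. phi_expansion m S \<and> (\<forall>k. m \<le> luc (2*k+1) \<longrightarrow> S \<subseteq> {-(2*int k)..2*int k})"
proof (cases "m \<le> 1")
  case True
  then consider "m = 0" | "m = 1" by linarith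
  thus ?thesis
  proof cases
    case 1 thus ?thesis using exp0 by blast
  next
    case 2 thus ?thesis using exp1 by (intro exI[of _ "{0}"]) auto
  qed
next
  case False
  then obtain i where i: "(1 \<le> i \<and> luc (2*i) \<le> m \<and> m \<le> luc (2*i+1)) \<or> (luc (2*i+1) < m \<and> m < luc (2*i+2))"
    using locate[of m] by auto
  thus ?thesis
  proof
    assume h: "1 \<le> i \<and> luc (2*i) \<le> m \<and> m \<le> luc (2*i+1)"
    then obtain i' where i': "i = Suc i'" by (cases i) auto
    have e: "luc (2*i) = luc (2*i'+2)" "luc (2*i+1) = luc (2*i'+3)"
      by (rule arg_cong[where f=luc], simp add: i')+
    have h2: "luc (2*i'+2) \<le> m" "m \<le> luc (2*i'+3)" using h by (simp_all only: e)
    have "CS i' m" using g h2 unfolding Good_def by blast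
    then obtain R where R: "phi_expansion m (insert (2*int i'+2) (insert (-(2*int i'+2)) R))"
       "R \<subseteq> {-(2*int i')..2*int i'}" unfolding CS_def by blast
    show ?thesis
    proof (intro exI conjI allI impI)
      fix k assume mk: "m \<le> luc (2*k+1)"
      have "luc (2*i'+2) \<le> luc (2*k+1)" using h2 mk by linarith
      hence "2*i'+2 \<le> 2*k+1" using luc_mono_iff by simp
      hence "int i' + 1 \<le> int k" by linarith
      thus "insert (2*int i'+2) (insert (-(2*int i'+2)) R) \<subseteq> {-(2*int k)..2*int k}" using R(2) by auto
    qed (rule R(1))
  next
    assume h: "luc (2*i+1) < m \<and> m < luc (2*i+2)"
    have "DS i m" using g h unfolding Good_def by auto
    then obtain R where R: "phi_expansion m (insert (2*int i+1) (insert (-(2*int i+2)) R))"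
       "R \<subseteq> {1-2*int i..2*int i-1}" unfolding DS_def by blast
    show ?thesis
    proof (intro exI conjI allI impI)
      fix k assume mk: "m \<le> luc (2*k+1)"
      have "\<not> 2*k+1 \<le> 2*i+1"
      proof
        assume "2*k+1 \<le> 2*i+1"
        hence "luc (2*k+1) \<le> luc (2*i+1)" using luc_mono_iff by simp
        thus False using h mk by simp
      qed
      hence "int i + 1 \<le> int k" by linarith
      thus "insert (2*int i+1) (insert (-(2*int i+2)) R) \<subseteq> {-(2*int k)..2*int k}" using R(2) by auto
    qed (rule R(1))
  qed
qed

lemma luc_simp2: "luc (2*k+3) = luc (2*k+2) + luc (2*k+1)" "luc (2*k+2) = luc (2*k+1) + luc (2*k)"
  "luc (2*k+4) = luc (2*k+3) + luc (2*k+2)" "luc (2*k+5) = luc (2*k+4) + luc (2*k+3)"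
  by (rule luc_rec'; simp)+

lemma good: "Good N"
proof (induction N rule: less_induct)
  case (less N)
  have partC: "CS k N" if h: "luc (2*k+2) \<le> N" "N \<le> luc (2*k+3)" for k
  proof -
    define m where "m = N - luc (2*k+2)"
    have Nm: "N = luc (2*k+2) + m" using h m_def by simp
    have mb: "m \<le> luc (2*k+1)" using h m_def luc_simp2(1)[of k] by simp
    have "m < N" using Nm luc_pos[of "2*k+2"] by simp
    then obtain S where S: "phi_expansion m S" "\<forall>k. m \<le> luc (2*k+1) \<longrightarrow> S \<subseteq> {-(2*int k)..2*int k}"
      using Bnd less.IH by blast
    have "S \<subseteq> {-(2*int k)..2*int k}" using S(2) mb by blast
    from constrC[OF S(1) this] have "phi_expansion N (insert (2*int k+2) (insert (-(2*int k+2)) S))"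
      using Nm by simp
    from CS_I[OF this refl refl] show ?thesis using \<open>S \<subseteq> _\<close> by (meson atLeastAtMost_iff subsetD)
  qed
  have partD: "DS k N" if h: "luc (2*k+1) < N" "N < luc (2*k+2)" for k
  proof (cases k)
    case 0
    hence "N = 2" using h by (simp add: numeral_2_eq_2 luc.simps)
    thus ?thesis using 0 exp2 by (intro DS_I[of _ 1 "-2" "{}"]) auto
  next
    case (Suc k')
    have e1: "luc (2*k+1) = luc (2*k'+3)" "luc (2*k+2) = luc (2*k'+4)"
      by (rule arg_cong[where f=luc], simp add: Suc)+
    have h': "luc (2*k'+3) < N" "N < luc (2*k'+4)" using h by (simp_all only: e1)
    define m where "m = N - luc (2*k'+3)"
    have Nm: "N = luc (2*k'+3) + m" using h' m_def by simp
    have m1: "1 \<le> m" "m < luc (2*k'+2)" using h' m_def luc_simp2[of k'] by auto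
    show ?thesis
    proof (cases "m < luc (2*k')")
      case True
      define N' where "N' = luc (2*k'+1) + m"
      have "N' < N" using Nm N'_def luc_simp2[of k'] luc_pos[of "2*k'+2"] by simp
      moreover have "luc (2*k'+1) < N'" "N' < luc (2*k'+2)" using N'_def True m1 luc_simp2[of k'] by auto
      ultimately have "DS k' N'" using less.IH unfolding Good_def by blast
      then obtain R where R: "phi_expansion N' (insert (2*int k'+1) (insert (-(2*int k'+2)) R))"
        "R \<subseteq> {1-2*int k'..2*int k'-1}" unfolding DS_def by blast
      from constrDa[OF R(1) R(2) N'_def] have
        "phi_expansion N (insert (2*int k'+3) (insert (-(2*int k'+4)) (insert (-(2*int k'+1)) R)))"
        using Nm by simp
      from DS_I[OF this, of k] show ?thesis using R(2) Suc by (force simp: subset_iff)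
    next
      case F1: False
      show ?thesis
      proof (cases "m \<le> luc (2*k'+1)")
        case True
        obtain j where j: "k' = Suc j"
        proof (cases k')
          case 0 thus ?thesis using F1 True by simp
        qed
        have "m < N" using Nm luc_pos[of "2*k'+3"] by simp
        moreover have ej: "luc (2*k') = luc (2*j+2)" "luc (2*k'+1) = luc (2*j+3)"
          by (rule arg_cong[where f=luc], simp add: j)+
        moreover have "luc (2*j+2) \<le> m" "m \<le> luc (2*j+3)" using F1 True by (simp_all only: ej not_less)
        ultimately have "CS j m" using less.IH unfolding Good_def by blast
        then obtain R where R: "phi_expansion m (insert (2*int j+2) (insert (-(2*int j+2)) R))"
          "R \<subseteq> {-(2*int j)..2*int j}" unfolding CS_def by blast
        from constrDb[OF R(1) R(2)] have
          "phi_expansion N (insert (2*int j+5) (insert (-(2*int j+6)) (insert (2*int j+2) (insert (-(2*int j+3)) R))))"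
          using Nm j by (simp add: algebra_simps)
        from DS_I[OF this, of k] show ?thesis using R(2) Suc j by (force simp: subset_iff)
      next
        case F2: False
        define m' where "m' = m - luc (2*k'+1)"
        define N' where "N' = luc (2*k'+1) + m'"
        have m'b: "1 \<le> m'" "m' < luc (2*k')" using F2 m1 m'_def luc_simp2[of k'] by auto
        have NN: "N = luc (2*k'+3) + luc (2*k'+1) + m'" using Nm m'_def F2 by simp
        have "N' < N" using NN N'_def luc_pos[of "2*k'+3"] by simp
        moreover have "luc (2*k'+1) < N'" "N' < luc (2*k'+2)" using N'_def m'b luc_simp2[of k'] by auto
        ultimately have "DS k' N'" using less.IH unfolding Good_def by blast
        then obtain R where R: "phi_expansion N' (insert (2*int k'+1) (insert (-(2*int k'+2)) R))"
          "R \<subseteq> {1-2*int k'..2*int k'-1}" unfolding DS_def by blast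
        from constrDc[OF R(1) R(2) N'_def] have
          "phi_expansion N (insert (2*int k'+3) (insert (-(2*int k'+4)) (insert (2*int k'+1) R)))"
          using NN by simp
        from DS_I[OF this, of k] show ?thesis using R(2) Suc by (force simp: subset_iff)
      qed
    qed
  qed
  show ?case unfolding Good_def using partC partD by blast
qed



lemma luc_vals: "luc 2 = 3" "luc 3 = 4" "luc 4 = 7" "luc 5 = 11" "luc 6 = 18"
  by (simp_all add: luc.simps eval_nat_numeral)

lemma sb_rel: "phi_expansion N T \<and> card T = card S + d \<Longrightarrow> phi_expansion M S \<Longrightarrow> s_beta N = s_beta M + d"
  using sb_eq by auto

lemma DS_of: "luc (2*k+1) < N \<Longrightarrow> N < luc (2*k+2) \<Longrightarrow> DS k N"
  using good[of N] unfolding Good_def by blast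

lemma CS_of: "luc (2*k+2) \<le> N \<Longrightarrow> N \<le> luc (2*k+3) \<Longrightarrow> CS k N"
  using good[of N] unfolding Good_def by blast

lemma P1: "m \<le> luc (2*k+1) \<Longrightarrow> s_beta (luc (2*k+2) + m) = s_beta m + 2"
proof -
  assume mb: "m \<le> luc (2*k+1)"
  obtain S where S: "phi_expansion m S" "\<forall>k. m \<le> luc (2*k+1) \<longrightarrow> S \<subseteq> {-(2*int k)..2*int k}"
    using Bnd[OF good] by blast
  have "S \<subseteq> {-(2*int k)..2*int k}" using S(2) mb by blast
  note c = constrC[OF S(1) this]
  have "s_beta (luc (2*k+2) + m) = card (insert (2*int k+2) (insert (-(2*int k+2)) S))"
    using c sb_eq by blast
  thus ?thesis using c sb_eq[OF S(1)] by simp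
qed

lemma P2a: "1 \<le> m \<Longrightarrow> m < luc (2*k) \<Longrightarrow> s_beta (luc (2*k+3) + m) = s_beta (luc (2*k+1) + m) + 1"
proof -
  assume m: "1 \<le> m" "m < luc (2*k)"
  have "DS k (luc (2*k+1) + m)" using m luc_simp2(2)[of k] by (intro DS_of) auto
  then obtain R where R: "phi_expansion (luc (2*k+1) + m) (insert (2*int k+1) (insert (-(2*int k+2)) R))"
    "R \<subseteq> {1-2*int k..2*int k-1}" unfolding DS_def by blast
  note c = constrDa[OF R(1) R(2) refl]
  from sb_rel[OF c R(1)] show ?thesis .
qed

lemma P2c: "1 \<le> m \<Longrightarrow> m < luc (2*k) \<Longrightarrow> s_beta (luc (2*k+3) + luc (2*k+1) + m) = s_beta (luc (2*k+1) + m) + 1"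
proof -
  assume m: "1 \<le> m" "m < luc (2*k)"
  have "DS k (luc (2*k+1) + m)" using m luc_simp2(2)[of k] by (intro DS_of) auto
  then obtain R where R: "phi_expansion (luc (2*k+1) + m) (insert (2*int k+1) (insert (-(2*int k+2)) R))"
    "R \<subseteq> {1-2*int k..2*int k-1}" unfolding DS_def by blast
  note c = constrDc[OF R(1) R(2) refl]
  from sb_rel[OF c R(1)] show ?thesis .
qed

lemma P2b: "luc (2*j+2) \<le> m \<Longrightarrow> m \<le> luc (2*j+3) \<Longrightarrow> s_beta (luc (2*j+5) + m) = s_beta m + 2"
proof -
  assume m: "luc (2*j+2) \<le> m" "m \<le> luc (2*j+3)"
  have "CS j m" using m by (intro CS_of) auto
  then obtain R where R: "phi_expansion m (insert (2*int j+2) (insert (-(2*int j+2)) R))"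
    "R \<subseteq> {-(2*int j)..2*int j}" unfolding CS_def by blast
  note c = constrDb[OF R(1) R(2)]
  from sb_rel[OF c R(1)] show ?thesis .
qed

lemma sb_base: "s_beta 0 = 0" "s_beta 1 = 1" "s_beta 2 = 2" "s_beta 3 = 2" "s_beta 4 = 3"
  "s_beta 5 = 3" "s_beta 6 = 3"
proof -
  show a: "s_beta 0 = 0" using sb_eq[OF exp0] by simp
  show b: "s_beta 1 = 1" using sb_eq[OF exp1] by simp
  show c: "s_beta 2 = 2" using sb_eq[OF exp2] by simp
  show "s_beta 3 = 2" using P1[of 0 0] a by (simp add: luc.simps eval_nat_numeral)
  show "s_beta 4 = 3" using P1[of 1 0] b by (simp add: luc.simps eval_nat_numeral)
  show "s_beta 5 = 3" using P2a[of 1 0] c by (simp add: luc.simps eval_nat_numeral)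
  show "s_beta 6 = 3" using P2c[of 1 0] c by (simp add: luc.simps eval_nat_numeral)
qed



definition G :: "nat \<Rightarrow> letter \<Rightarrow> letter list" where "G k a = (gamma_word ^^ k) [a]"
definition Dw :: "letter list \<Rightarrow> nat list" where "Dw w = concat (map delta w)"
fun shift :: "nat \<Rightarrow> letter \<Rightarrow> letter" where "shift j (i, c) = (i + j, c)"

lemma gw_append: "gamma_word (u @ v) = gamma_word u @ gamma_word v"
  by (simp add: gamma_word_def)

lemma gwp_append: "(gamma_word ^^ k) (u @ v) = (gamma_word ^^ k) u @ (gamma_word ^^ k) v"
  by (induction k arbitrary: u v) (simp_all add: gw_append)

lemma gwp_nil: "(gamma_word ^^ k) [] = []"
  by (induction k) (simp_all add: gamma_word_def)

lemma gwp_list: "(gamma_word ^^ k) w = concat (map (G k) w)"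
proof (induction w)
  case Nil thus ?case by (simp add: gwp_nil)
next
  case (Cons a w)
  have "(gamma_word ^^ k) (a # w) = (gamma_word ^^ k) ([a] @ w)" by simp
  also have "\<dots> = G k a @ (gamma_word ^^ k) w" unfolding gwp_append G_def ..
  finally show ?case using Cons by simp
qed

lemma G_Suc: "G (Suc k) a = concat (map (G k) (gamma a))"
proof -
  have "G (Suc k) a = (gamma_word ^^ k) (gamma_word [a])" unfolding G_def funpow_Suc_right by simp
  also have "gamma_word [a] = gamma a" by (simp add: gamma_word_def)
  finally show ?thesis by (simp add: gwp_list)
qed

lemma gamma_shift: "gamma (shift j a) = map (shift j) (gamma a)"
  by (cases a; rename_tac i c; case_tac c) auto

lemma G_shift: "G k (shift j a) = map (shift j) (G k a)"
proof (induction k arbitrary: a)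
  case 0 thus ?case by (simp add: G_def)
next
  case (Suc k)
  show ?case by (simp add: G_Suc gamma_shift Suc map_concat o_def)
qed

lemma delta_shift: "delta (shift j a) = map (\<lambda>x. x + j) (delta a)"
  by (cases a; rename_tac i c; case_tac c) auto

lemma Dw_append: "Dw (u @ v) = Dw u @ Dw v" by (simp add: Dw_def)

lemma Dw_shift: "Dw (map (shift j) w) = map (\<lambda>x. x + j) (Dw w)"
  by (induction w) (simp_all add: Dw_def delta_shift)

lemma G_shift': "G k (j, c) = map (shift j) (G k (0, c))"
  using G_shift[of k j "(0,c)"] by simp

lemma Dw_Gj: "Dw (G k (j, c)) = map (\<lambda>x. x + j) (Dw (G k (0, c)))"
  using G_shift'[of k j c] Dw_shift by simp

lemma rec_c0: "Dw (G (Suc k) (0,c0)) = Dw (G k (0,c0)) @ Dw (G k (0,c1))"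
  by (simp add: G_Suc Dw_append)
lemma rec_c1: "Dw (G (Suc k) (0,c1)) = Dw (G k (0,c2)) @ Dw (G k (0,c3))"
  by (simp add: G_Suc Dw_append)
lemma rec_c2: "Dw (G (Suc k) (0,c2)) = map (\<lambda>x. x + 2) (Dw (G k (0,c0))) @ map (\<lambda>x. x + 2) (Dw (G k (0,c1)))
    @ map (\<lambda>x. x + 2) (Dw (G k (0,c2)))"
  by (simp add: G_Suc Dw_append Dw_Gj[of k "Suc (Suc 0)"])
lemma rec_c3: "Dw (G (Suc k) (0,c3)) = map (\<lambda>x. x + 1) (Dw (G k (0,c3))) @ map (\<lambda>x. x + 2) (Dw (G k (0,c2)))
    @ map (\<lambda>x. x + 1) (Dw (G k (0,c3)))"
  by (simp add: G_Suc Dw_append Dw_Gj[of k "Suc (Suc 0)"] Dw_Gj[of k "Suc 0"])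

lemma upt_split: "a \<le> b \<Longrightarrow> b \<le> c \<Longrightarrow> map g [a..<c] = map g [a..<b] @ map g [b..<c]"
  by (metis map_append le_Suc_ex upt_add_eq_append)

lemma shift_list: "(\<And>i. a \<le> i \<Longrightarrow> i < b \<Longrightarrow> g (i + t) = g i + d) \<Longrightarrow>
   map g [a+t..<b+t] = map (\<lambda>x. x + d) (map g [a..<b])"
proof (rule nth_equalityI)
  assume h: "\<And>i. a \<le> i \<Longrightarrow> i < b \<Longrightarrow> g (i + t) = g i + d"
  show "length (map g [a+t..<b+t]) = length (map (\<lambda>x. x + d) (map g [a..<b]))" by simp
  fix i assume "i < length (map g [a+t..<b+t])"
  hence i: "i < b - a" by simp
  have "g ((a + i) + t) = g (a + i) + d" using h[of "a+i"] i by simp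
  thus "map g [a+t..<b+t] ! i = map (\<lambda>x. x + d) (map g [a..<b]) ! i" using i by (simp add: add_ac)
qed



lemma P1': "m \<le> luc (2*k+3) \<Longrightarrow> s_beta (luc (2*k+4) + m) = s_beta m + 2"
proof -
  assume a: "m \<le> luc (2*k+3)"
  have e: "luc (2*Suc k+1) = luc (2*k+3)" "luc (2*Suc k+2) = luc (2*k+4)"
    by (rule arg_cong[where f=luc], simp)+
  show ?thesis using P1[of m "Suc k", unfolded e] a by simp
qed

lemma P2a': "1 \<le> m \<Longrightarrow> m < luc (2*k+2) \<Longrightarrow> s_beta (luc (2*k+5) + m) = s_beta (luc (2*k+3) + m) + 1"
proof -
  assume a: "1 \<le> m" "m < luc (2*k+2)"
  have e: "luc (2*Suc k) = luc (2*k+2)" "luc (2*Suc k+1) = luc (2*k+3)" "luc (2*Suc k+3) = luc (2*k+5)"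
    by (rule arg_cong[where f=luc], simp)+
  show ?thesis using P2a[of m "Suc k", unfolded e] a by simp
qed

lemma P2c': "1 \<le> m \<Longrightarrow> m < luc (2*k+2) \<Longrightarrow> s_beta (luc (2*k+5) + luc (2*k+3) + m) = s_beta (luc (2*k+3) + m) + 1"
proof -
  assume a: "1 \<le> m" "m < luc (2*k+2)"
  have e: "luc (2*Suc k) = luc (2*k+2)" "luc (2*Suc k+1) = luc (2*k+3)" "luc (2*Suc k+3) = luc (2*k+5)"
    by (rule arg_cong[where f=luc], simp)+
  show ?thesis using P2c[of m "Suc k", unfolded e] a by simp
qed

lemma shift_list':
  assumes "a' = a + t" "b' = b + t" "\<And>i. a \<le> i \<Longrightarrow> i < b \<Longrightarrow> g (i + t) = g i + d"
  shows "map g [a'..<b'] = map (\<lambda>x. x + d) (map g [a..<b])"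
  using shift_list[of a b g t d, OF assms(3)] assms(1,2) by simp

definition Q :: "nat \<Rightarrow> bool" where
  "Q k \<longleftrightarrow> Dw (G k (0,c0)) = map s_beta [0..<luc (2*k)] \<and>
           Dw (G k (0,c1)) = map s_beta [luc (2*k)..<luc (2*k+2)] \<and>
           Dw (G k (0,c2)) = map s_beta [luc (2*k+2)..<luc (2*k+3)+1] \<and>
           Dw (G k (0,c3)) = map s_beta [luc (2*k+3)+1..<luc (2*k+4)]"

lemma Q0: "Q 0"
proof -
  have e: "luc (2*0) = 2" "luc (2*0+2) = 3" "luc (2*0+3) = 4" "luc (2*0+4) = 7"
    by (simp_all add: luc.simps eval_nat_numeral)
  have sb: "s_beta 0 = 0" "s_beta (Suc 0) = 1" "s_beta (Suc (Suc 0)) = 2" "s_beta (Suc (Suc (Suc 0))) = 2"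
    "s_beta (Suc (Suc (Suc (Suc 0)))) = 3" "s_beta (Suc (Suc (Suc (Suc (Suc 0))))) = 3"
    "s_beta (Suc (Suc (Suc (Suc (Suc (Suc 0)))))) = 3"
    using sb_base by (simp_all add: eval_nat_numeral)
  show ?thesis unfolding Q_def e by (simp add: G_def Dw_def sb sb_base upt_rec)
qed

lemma Q_step: "Q k \<Longrightarrow> Q (Suc k)"
proof -
  assume q: "Q k"
  define l0 where "l0 = luc (2*k)"
  define l1 where "l1 = luc (2*k+1)"
  define l2 where "l2 = luc (2*k+2)"
  define l3 where "l3 = luc (2*k+3)"
  define l4 where "l4 = luc (2*k+4)"
  define l5 where "l5 = luc (2*k+5)"
  define l6 where "l6 = luc (2*k+6)"
  have r: "l2 = l1 + l0" "l3 = l2 + l1" "l4 = l3 + l2" "l5 = l4 + l3" "l6 = l5 + l4"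
    unfolding l0_def l1_def l2_def l3_def l4_def l5_def l6_def by (rule luc_rec'; simp)+
  have pos: "l0 \<ge> 1" "l1 \<ge> 1" "l2 \<ge> 1" using luc_pos l0_def l1_def l2_def by auto
  have e: "luc (2*Suc k) = l2" "luc (2*Suc k+2) = l4" "luc (2*Suc k+3) = l5" "luc (2*Suc k+4) = l6"
    unfolding l2_def l4_def l5_def l6_def by (rule arg_cong[where f=luc], simp)+
  have A: "Dw (G k (0,c0)) = map s_beta [0..<l0]" and B: "Dw (G k (0,c1)) = map s_beta [l0..<l2]"
   and C: "Dw (G k (0,c2)) = map s_beta [l2..<l3+1]" and D: "Dw (G k (0,c3)) = map s_beta [l3+1..<l4]"
    using q unfolding Q_def l0_def l2_def l3_def l4_def by auto
  have A': "Dw (G (Suc k) (0,c0)) = map s_beta [0..<l2]"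
    using rec_c0[of k] A B upt_split[of 0 l0 l2 s_beta] r by simp
  have B': "Dw (G (Suc k) (0,c1)) = map s_beta [l2..<l4]"
    using rec_c1[of k] C D upt_split[of l2 "l3+1" l4 s_beta] r pos by simp
  have ABC: "map s_beta [0..<l3+1] = Dw (G k (0,c0)) @ Dw (G k (0,c1)) @ Dw (G k (0,c2))"
    using A B C upt_split[of 0 l0 l2 s_beta] upt_split[of 0 l2 "l3+1" s_beta] r by simp
  have shC: "map s_beta [l4..<l5+1] = map (\<lambda>x. x + 2) (map s_beta [0..<l3+1])"
  proof (rule shift_list')
    fix i assume "0 \<le> i" "i < l3 + 1"
    thus "s_beta (i + l4) = s_beta i + 2" using P1'[of i k] unfolding l3_def l4_def by (simp add: add.commute)
  qed (use r in simp_all)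
  have "Dw (G (Suc k) (0,c2)) = map (\<lambda>x. x+2) (Dw (G k (0,c0)) @ Dw (G k (0,c1)) @ Dw (G k (0,c2)))"
    by (simp only: rec_c2 map_append)
  also have "\<dots> = map (\<lambda>x. x+2) (map s_beta [0..<l3+1])" by (simp only: ABC)
  finally have C': "Dw (G (Suc k) (0,c2)) = map s_beta [l4..<l5+1]" using shC by simp
  have d1: "map s_beta [l5+1..<l5+l2] = map (\<lambda>x. x + 1) (map s_beta [l3+1..<l4])"
  proof (rule shift_list')
    fix i assume i: "l3 + 1 \<le> i" "i < l4"
    define m where "m = i - l3"
    have m: "1 \<le> m" "m < l2" "i = l3 + m" using i r m_def by auto
    have p: "s_beta (l5 + m) = s_beta (l3 + m) + 1" using P2a'[of m k] m unfolding l2_def l3_def l5_def by simp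
    have eq: "i + l4 = l5 + m" using m r by simp
    have "s_beta (i + l4) = s_beta (l5 + m)" unfolding eq ..
    also have "\<dots> = s_beta (l3 + m) + 1" by (rule p)
    also have "l3 + m = i" using m by simp
    finally show "s_beta (i + l4) = s_beta i + 1" .
  qed (use r in simp_all)
  have d2: "map s_beta [l5+l2..<l5+l3+1] = map (\<lambda>x. x + 2) (map s_beta [l2..<l3+1])"
  proof (rule shift_list')
    fix i assume i: "l2 \<le> i" "i < l3 + 1"
    thus "s_beta (i + l5) = s_beta i + 2" using P2b[of k i] unfolding l2_def l3_def l5_def by (simp add: add.commute)
  qed (use r in simp_all)
  have d3: "map s_beta [l5+l3+1..<l6] = map (\<lambda>x. x + 1) (map s_beta [l3+1..<l4])"
  proof (rule shift_list')
    fix i assume i: "l3 + 1 \<le> i" "i < l4"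
    define m where "m = i - l3"
    have m: "1 \<le> m" "m < l2" "i = l3 + m" using i r m_def by auto
    have p: "s_beta (l5 + l3 + m) = s_beta (l3 + m) + 1" using P2c'[of m k] m unfolding l2_def l3_def l5_def by simp
    have eq: "i + l5 = l5 + l3 + m" using m r by simp
    have "s_beta (i + l5) = s_beta (l5 + l3 + m)" unfolding eq ..
    also have "\<dots> = s_beta (l3 + m) + 1" by (rule p)
    also have "l3 + m = i" using m by simp
    finally show "s_beta (i + l5) = s_beta i + 1" .
  qed (use r in simp_all)
  have "map s_beta [l5+1..<l6] = map s_beta [l5+1..<l5+l2] @ map s_beta [l5+l2..<l5+l3+1] @ map s_beta [l5+l3+1..<l6]"
    using upt_split[of "l5+1" "l5+l2" l6 s_beta] upt_split[of "l5+l2" "l5+l3+1" l6 s_beta] r pos by simp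
  hence D': "Dw (G (Suc k) (0,c3)) = map s_beta [l5+1..<l6]"
    by (simp only: rec_c3 C D d1 d2 d3)
  show "Q (Suc k)" unfolding Q_def e using A' B' C' D' by simp
qed

lemma Q_all: "Q k" by (induction k) (auto intro: Q0 Q_step)



lemma gi_G: "gamma_iter k = G k (0,c0)" by (simp add: gamma_iter_def G_def)

lemma gamma_ne: "gamma a \<noteq> []" by (cases a; rename_tac i c; case_tac c) auto

lemma G_ne: "G k a \<noteq> []"
proof (induction k arbitrary: a)
  case 0 thus ?case by (simp add: G_def)
next
  case (Suc k)
  obtain b bs where "gamma a = b # bs" using gamma_ne[of a] by (cases "gamma a") auto
  thus ?case using Suc[of b] by (simp add: G_Suc)
qed

lemma gi_Suc: "gamma_iter (Suc k) = gamma_iter k @ G k (0,c1)"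
  by (simp add: gi_G G_Suc)

lemma gi_len: "k < length (gamma_iter k)"
proof (induction k)
  case 0 thus ?case by (simp add: gamma_iter_def)
next
  case (Suc k)
  have "length (G k (0,c1)) \<ge> 1" using G_ne[of k "(0,c1)"] by (cases "G k (0,c1)") auto
  thus ?case using Suc gi_Suc[of k] by simp
qed

lemma gi_prefix: "k \<le> k' \<Longrightarrow> \<exists>w. gamma_iter k' = gamma_iter k @ w"
proof (induction k' rule: dec_induct)
  case base thus ?case by auto
next
  case (step n)
  then obtain w where "gamma_iter n = gamma_iter k @ w" by auto
  thus ?case using gi_Suc[of n] by auto
qed

lemma gi_nth: "i < length (gamma_iter k) \<Longrightarrow> k \<le> k' \<Longrightarrow> gamma_iter k' ! i = gamma_iter k ! i"
  using gi_prefix[of k k'] by (auto simp: nth_append)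

definition xx :: "nat \<Rightarrow> letter" where "xx n = gamma_iter n ! n"

lemma xx_limit: "is_gamma_limit xx"
  unfolding is_gamma_limit_def
proof
  fix n
  show "\<exists>K. \<forall>k\<ge>K. n < length (gamma_iter k) \<and> gamma_iter k ! n = xx n"
  proof (intro exI[of _ n] allI impI conjI)
    fix k assume "n \<le> k"
    thus "n < length (gamma_iter k)" using gi_len[of k] by simp
    show "gamma_iter k ! n = xx n" unfolding xx_def using gi_nth gi_len \<open>n \<le> k\<close> by blast
  qed
qed

lemma limit_unique: "is_gamma_limit y \<Longrightarrow> y = xx"
proof
  fix n assume y: "is_gamma_limit y"
  obtain K1 where K1: "\<forall>k\<ge>K1. n < length (gamma_iter k) \<and> gamma_iter k ! n = y n"
    using y unfolding is_gamma_limit_def by blast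
  obtain K2 where K2: "\<forall>k\<ge>K2. n < length (gamma_iter k) \<and> gamma_iter k ! n = xx n"
    using xx_limit unfolding is_gamma_limit_def by blast
  show "y n = xx n" using K1[rule_format, of "max K1 K2"] K2[rule_format, of "max K1 K2"] by simp
qed

lemma x_gamma_eq: "x_gamma = xx"
  unfolding x_gamma_def using xx_limit limit_unique by (rule the_equality)

lemma map_xx: "map xx [0..<n] = take n (gamma_iter n)"
proof (rule nth_equalityI)
  show "length (map xx [0..<n]) = length (take n (gamma_iter n))" using gi_len[of n] by simp
  fix i assume "i < length (map xx [0..<n])"
  hence i: "i < n" by simp
  have "gamma_iter n ! i = gamma_iter i ! i" using gi_nth[of i i n] gi_len[of i] i by simp
  thus "map xx [0..<n] ! i = take n (gamma_iter n) ! i" using i by (simp add: xx_def)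
qed

theorem theorem5:
  shows "\<forall>n. concat (map (\<lambda>i. delta (x_gamma i)) [0..<n])
             = map s_beta [0..<length (concat (map (\<lambda>i. delta (x_gamma i)) [0..<n]))]"
proof
  fix n
  define w where "w = gamma_iter n"
  have lhs: "concat (map (\<lambda>i. delta (x_gamma i)) [0..<n]) = Dw (take n w)"
    unfolding x_gamma_eq Dw_def w_def map_xx[symmetric] by (simp add: o_def)
  have full: "Dw w = map s_beta [0..<luc (2*n)]" using Q_all[of n] unfolding Q_def w_def gi_G by simp
  have split: "Dw w = Dw (take n w) @ Dw (drop n w)" using Dw_append[of "take n w" "drop n w"] by simp
  define l where "l = length (Dw (take n w))"
  have ll: "l \<le> luc (2*n)" using split full l_def by (metis length_append length_map length_upt le_add1 minus_nat.diff_0)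
  have "Dw (take n w) = take l (Dw w)" using split l_def by simp
  also have "\<dots> = map s_beta [0..<l]" using full ll by (simp add: take_map)
  finally show "concat (map (\<lambda>i. delta (x_gamma i)) [0..<n])
             = map s_beta [0..<length (concat (map (\<lambda>i. delta (x_gamma i)) [0..<n]))]"
    using lhs l_def by simp
qed


end
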